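(* Let $p$ be a prime and $n,k$ natural numbers with $n+1<p$ and $k<p$. Let $(A,+,\circ)$ be a strongly nilpotent brace of cardinality $p^n$ with nilpotency index $k$. Let $\gamma$ be a primitive root modulo $p^p$, $\xi=\gamma^{p^{p-1}}$, and define $a\cdot b=\sum_{i=0}^{p-2}\xi^{p-1-i}((\xi^i a)*b)$ for $a,b\in A$. Then $(a+b)\cdot c=a\cdot c+b\cdot c$ and $a\cdot(b+c)=a\cdot b+a\cdot c$ for all $a,b,c\in A$.
   Context: A (left) brace is a set $A$ with binary operations $+,\circ$ such that $(A,+)$ is an abelian group, $(A,\circ)$ is a group, and $a\circ(b+c)+a=a\circ b+a\circ c$ for all $a,b,c$. Write $a*b=a\circ b-a-b$. For additive subgroups $X,Y$, $X*Y$ is the additive subgroup generated by all $x*y$. Set $A^{[1]}=A$, $A^{[i+1]}=\sum_{j=1}^{i}A^{[j]}*A^{[i+1-j]}$. The brace is strongly nilpotent if $A^{[m]}=0$ for some $m$ and has nilpotency index $k$ if $A^{[k]}=0\neq A^{[k-1]}$. For an integer $m$ and $a\in A$, $ma$ denotes the $m$-fold additive multiple (so $\xi^i a$ is the sum of $\xi^i$ copies of $a$). *)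

theory Defs
  imports Main "HOL-Number_Theory.Number_Theory"
begin

definition is_brace :: "('a::ab_group_add \<Rightarrow> 'a \<Rightarrow> 'a) \<Rightarrow> bool" where
  "is_brace circ \<longleftrightarrow>
     (\<forall>a b c. circ (circ a b) c = circ a (circ b c)) \<and>
     (\<exists>e. (\<forall>a. circ e a = a \<and> circ a e = a) \<and> (\<forall>a. \<exists>b. circ a b = e \<and> circ b a = e)) \<and>
     (\<forall>a b c. circ a (b + c) + a = circ a b + circ a c)"

definition bstar :: "('a::ab_group_add \<Rightarrow> 'a \<Rightarrow> 'a) \<Rightarrow> 'a \<Rightarrow> 'a \<Rightarrow> 'a" where
  "bstar circ a b = circ a b - a - b"

definition add_subgroup :: "'a::ab_group_add set \<Rightarrow> bool" where
  "add_subgroup H \<longleftrightarrow> 0 \<in> H \<and> (\<forall>x\<in>H. \<forall>y\<in>H. x + y \<in> H) \<and> (\<forall>x\<in>H. - x \<in> H)"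

definition add_gen :: "'a::ab_group_add set \<Rightarrow> 'a set" where
  "add_gen S = \<Inter>{H. add_subgroup H \<and> S \<subseteq> H}"

definition bprod :: "('a::ab_group_add \<Rightarrow> 'a \<Rightarrow> 'a) \<Rightarrow> 'a set \<Rightarrow> 'a set \<Rightarrow> 'a set" where
  "bprod circ X Y = add_gen {bstar circ x y | x y. x \<in> X \<and> y \<in> Y}"

text \<open>A^[i]; the index 0 is unused (set to the whole brace). A^[1] = A and
  A^[m+1] = sum_{j=1}^{m} A^[j] * A^[m+1-j] (sum of subgroups = subgroup generated by the union).\<close>
function bpow :: "('a::ab_group_add \<Rightarrow> 'a \<Rightarrow> 'a) \<Rightarrow> nat \<Rightarrow> 'a set" where
  "bpow circ 0 = UNIV"
| "bpow circ (Suc 0) = UNIV"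
| "bpow circ (Suc (Suc m)) =
     add_gen (\<Union>j\<in>{1..Suc m}. bprod circ (bpow circ j) (bpow circ (Suc (Suc m) - j)))"
  by pat_completeness auto
termination
  by (relation "measure (\<lambda>(c, i). i)") auto

definition strongly_nilpotent :: "('a::ab_group_add \<Rightarrow> 'a \<Rightarrow> 'a) \<Rightarrow> bool" where
  "strongly_nilpotent circ \<longleftrightarrow> (\<exists>m\<ge>1. bpow circ m = {0})"

definition nilpotency_index :: "('a::ab_group_add \<Rightarrow> 'a \<Rightarrow> 'a) \<Rightarrow> nat \<Rightarrow> bool" where
  "nilpotency_index circ k \<longleftrightarrow> k \<ge> 1 \<and> bpow circ k = {0} \<and> (k \<ge> 2 \<longrightarrow> bpow circ (k - 1) \<noteq> {0})"

fun nmul :: "nat \<Rightarrow> 'a::ab_group_add \<Rightarrow> 'a" where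
  "nmul 0 a = 0"
| "nmul (Suc m) a = a + nmul m a"

definition bdot :: "('a::ab_group_add \<Rightarrow> 'a \<Rightarrow> 'a) \<Rightarrow> nat \<Rightarrow> nat \<Rightarrow> 'a \<Rightarrow> 'a \<Rightarrow> 'a" where
  "bdot circ p \<xi> a b = (\<Sum>i = 0..p - 2. nmul (\<xi> ^ (p - 1 - i)) (bstar circ (nmul (\<xi> ^ i) a) b))"

end

theory Submission
  imports Defs "HOL-Computational_Algebra.Polynomial" "HOL-Computational_Algebra.Primes"
begin

lemma lift_int:
  fixes z :: int and p :: nat
  assumes "int p dvd z - 1"
  shows "int p ^ Suc r dvd z ^ (p ^ r) - 1"
proof (induction r)
  case 0 then show ?case using assms by simp
next
  case (Suc r)
  define y where "y = z ^ (p ^ r)"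
  have yy: "z ^ (p ^ Suc r) = y ^ p" by (simp add: y_def power_mult[symmetric] mult.commute)
  have "int p dvd (\<Sum>i<p. y ^ i)"
  proof -
    have "(\<Sum>i<p. y ^ i) = (\<Sum>i<p. (y ^ i - 1)) + int p" by (simp add: sum_subtractf)
    moreover have "int p dvd (\<Sum>i<p. (y ^ i - 1))"
    proof (rule dvd_sum)
      fix i assume "i \<in> {..<p}"
      have "int p dvd y - 1" using Suc.IH unfolding y_def[symmetric] by (meson dvd_trans dvd_power Suc_neq_Zero zero_less_Suc)
      moreover have "y - 1 dvd y ^ i - 1" by (simp add: power_diff_1_eq)
      ultimately show "int p dvd y ^ i - 1" by (rule dvd_trans)
    qed
    ultimately show ?thesis by simp
  qed
  moreover have "y ^ p - 1 = (y - 1) * (\<Sum>i<p. y ^ i)" by (rule power_diff_1_eq)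
  ultimately show ?case using Suc.IH unfolding yy y_def[symmetric]
    by (metis mult_dvd_mono power_Suc2)
qed

lemma geo:
  fixes p \<gamma> e :: nat
  assumes p: "prime p" and g: "residue_primroot (p^p) \<gamma>" and e: "0 < e" "e < p - 1"
  shows "int (p^p) dvd (\<Sum>s<p-1. (int (\<gamma> ^ (p^(p-1))) ^ e) ^ s)"
proof -
  define y where "y = \<gamma> ^ (p^(p-1) * e)"
  have yy: "int (\<gamma> ^ (p^(p-1))) ^ e = int y" by (simp add: y_def power_mult)
  have p1: "p > 1" using p prime_gt_1_nat by blast
  have tot: "totient (p^p) = p^(p-1) * (p - 1)" using totient_prime_power[of p p] p p1 by simp
  have ord: "ord (p^p) \<gamma> = p^(p-1) * (p - 1)" using g tot by (simp add: residue_primroot_def)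
  have h1: "[y^(p-1) = 1] (mod p^p)"
    unfolding ord_divides ord y_def power_mult[symmetric] by simp
  hence h1': "int (p^p) dvd int y ^ (p-1) - 1"
    using cong_int_iff[of "y^(p-1)" 1 "p^p"] by (simp add: cong_iff_dvd_diff)
  have h2: "\<not> int p dvd int y - 1"
  proof
    assume "int p dvd int y - 1"
    from lift_int[OF this, of "p - 1"] have "int p ^ p dvd int y ^ (p^(p-1)) - 1"
      using p1 by simp
    hence "[int (y ^ (p^(p-1))) = int 1] (mod int (p^p))"
      by (simp add: cong_iff_dvd_diff)
    hence "[\<gamma> ^ (p^(p-1) * e * p^(p-1)) = 1] (mod p^p)"
      unfolding cong_int_iff y_def by (simp add: power_mult)
    hence "p^(p-1) * (p - 1) dvd p^(p-1) * (e * p^(p-1))"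
      unfolding ord_divides ord by (simp add: mult.assoc)
    hence "(p - 1) dvd e * p^(p-1)" using p1 by simp
    moreover have "coprime (p - 1) (p^(p-1))" using coprime_diff_one_left_nat[of p] p1 by simp
    ultimately have "(p - 1) dvd e" using coprime_dvd_mult_left_iff by blast
    with e show False using nat_dvd_not_less by blast
  qed
  have h3: "coprime (int p ^ p) (int y - 1)"
    using prime_imp_coprime[of "int p" "int y - 1"] h2 p by simp
  have "int y ^ (p-1) - 1 = (int y - 1) * (\<Sum>s<p-1. int y ^ s)" by (rule power_diff_1_eq)
  with h1' h3 show ?thesis unfolding yy
    by (metis coprime_dvd_mult_right_iff of_nat_power)
qed

definition ffp :: "nat \<Rightarrow> int poly" where "ffp i = (\<Prod>r<i. [:- int r, 1:])"

lemma choose_step: "(m choose i) * (m - i) = (m choose Suc i) * Suc i"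
proof (cases m)
  case 0 then show ?thesis by simp
next
  case (Suc n)
  have "(m choose Suc i) * Suc i = Suc n * (n choose i)" using Suc_times_binomial[of i n] Suc by (simp add: mult.commute)
  also have "\<dots> = (m - i) * (m choose i)" using binomial_absorb_comp[of m i] Suc by simp
  finally show ?thesis by (simp add: mult.commute)
qed

lemma poly_ffp: "poly (ffp i) (int m) = int (fact i * (m choose i))"
proof (induction i)
  case 0 then show ?case by (simp add: ffp_def)
next
  case (Suc i)
  have "poly (ffp (Suc i)) (int m) = poly (ffp i) (int m) * (int m - int i)"
    by (simp add: ffp_def algebra_simps)
  also have "\<dots> = int (fact i * (m choose i)) * (int m - int i)" using Suc.IH by simp
  also have "\<dots> = int (fact i * ((m choose i) * (m - i)))"
    by (cases "i \<le> m") (simp_all add: of_nat_diff)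
  also have "fact i * ((m choose i) * (m - i)) = fact (Suc i) * (m choose Suc i)"
    unfolding choose_step fact_Suc by (simp add: algebra_simps)
  finally show ?case .
qed

lemma deg_ffp: "degree (ffp i) \<le> i"
proof -
  have "degree (ffp i) \<le> (\<Sum>r<i. degree [:- int r, 1:])"
    unfolding ffp_def using degree_prod_sum_le[of "{..<i}" "\<lambda>r. [:- int r, 1:]"] by (simp add: o_def)
  also have "\<dots> = i" by simp
  finally show ?thesis .
qed

lemma ffp_Suc0: "ffp (Suc i) = pCons 0 (\<Prod>r<i. [:- int (Suc r), 1:])"
  unfolding ffp_def prod.lessThan_Suc_shift by simp

lemma nt_main:
  fixes p \<gamma> \<xi> i j :: nat
  assumes p: "prime p" and g: "residue_primroot (p^p) \<gamma>" and xi: "\<xi> = \<gamma> ^ (p^(p-1))"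
    and i: "1 \<le> i" and j: "1 \<le> j" and ij: "i + j < p - 1"
  shows "p^p dvd (\<Sum>s<p-1. \<xi>^(p-1-s) * (((\<xi>^s) choose i) * ((\<xi>^s) choose j)))"
proof -
  define X where "X = int \<xi>"
  define Q where "Q = ffp i * ffp j"
  define N where "N = (\<Sum>s<p-1. \<xi>^(p-1-s) * (((\<xi>^s) choose i) * ((\<xi>^s) choose j)))"
  have hdeg: "degree Q \<le> p - 2"
    using deg_ffp[of i] deg_ffp[of j] degree_mult_le[of "ffp i" "ffp j"] ij unfolding Q_def by linarith
  obtain i' where i': "i = Suc i'" using i by (cases i) auto
  obtain j' where j': "j = Suc j'" using j by (cases j) auto
  obtain R where R: "Q = pCons 0 (pCons 0 R)"
    unfolding Q_def i' j' ffp_Suc0 by (simp add: mult_pCons_right)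
  have hq: "coeff Q t = 0" if "t < 2" for t
    using that R by (cases t) (auto simp: coeff_pCons split: nat.splits)
  have hpoly: "poly Q (int m) = int (fact i * fact j) * int ((m choose i) * (m choose j))" for m
    unfolding Q_def by (simp add: poly_ffp)
  have hsum: "poly Q x = (\<Sum>t\<le>p-2. coeff Q t * x^t)" for x
  proof -
    have "poly Q x = (\<Sum>t\<le>degree Q. coeff Q t * x^t)" by (rule poly_altdef)
    also have "\<dots> = (\<Sum>t\<le>p-2. coeff Q t * x^t)"
      by (rule sum.mono_neutral_left) (use hdeg in \<open>auto simp: coeff_eq_0\<close>)
    finally show ?thesis .
  qed
  have "int (fact i * fact j) * int N = (\<Sum>s<p-1. X^(p-1-s) * poly Q (X^s))"
    unfolding N_def X_def by (simp add: hpoly sum_distrib_left algebra_simps flip: of_nat_power)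
  also have "\<dots> = (\<Sum>s<p-1. \<Sum>t\<le>p-2. coeff Q t * (X^(p-1-s) * (X^s)^t))"
    unfolding hsum by (simp add: sum_distrib_left algebra_simps)
  also have "\<dots> = (\<Sum>t\<le>p-2. coeff Q t * (\<Sum>s<p-1. X^(p-1-s) * (X^s)^t))"
    by (subst sum.swap) (simp add: sum_distrib_left)
  finally have eq: "int (fact i * fact j) * int N = (\<Sum>t\<le>p-2. coeff Q t * (\<Sum>s<p-1. X^(p-1-s) * (X^s)^t))" .
  have "int (p^p) dvd int (fact i * fact j) * int N"
    unfolding eq
  proof (rule dvd_sum)
    fix t assume t: "t \<in> {..p-2}"
    show "int (p^p) dvd coeff Q t * (\<Sum>s<p-1. X^(p-1-s) * (X^s)^t)"
    proof (cases "t < 2")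
      case True then show ?thesis by (simp add: hq)
    next
      case False
      have "(\<Sum>s<p-1. X^(p-1-s) * (X^s)^t) = X^(p-1) * (\<Sum>s<p-1. (X^(t-1))^s)"
        unfolding sum_distrib_left
      proof (rule sum.cong)
        fix s assume s: "s \<in> {..<p-1}"
        have "p - 1 - s + s * t = p - 1 + (t - 1) * s" using s False
          by (simp add: algebra_simps)
        hence "X^(p-1-s) * (X^s)^t = X^(p - 1 + (t - 1) * s)" by (metis power_add power_mult)
        thus "X^(p-1-s) * (X^s)^t = X^(p-1) * (X^(t-1))^s" by (simp add: power_add power_mult)
      qed simp
      moreover have "int (p^p) dvd (\<Sum>s<p-1. (X^(t-1))^s)"
        unfolding X_def xi using geo[OF p g, of "t-1"] False t by simp
      ultimately show ?thesis by simp
    qed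
  qed
  moreover have "coprime (int (p^p)) (int (fact i * fact j))"
  proof -
    have "\<not> p dvd fact i * fact j" using ij p by (auto simp add: prime_dvd_mult_iff prime_dvd_fact_iff)
    hence "coprime p (fact i * fact j)" using p prime_imp_coprime by blast
    hence "coprime (p^p) (fact i * fact j)" by simp
    thus ?thesis using coprime_int_iff by blast
  qed
  ultimately have "int (p^p) dvd int N" using coprime_dvd_mult_right_iff by blast
  thus ?thesis unfolding N_def by (simp only: of_nat_dvd_iff)
qed

lemma nmul_add_n: "nmul (m + l) x = nmul m x + nmul l (x::'a::ab_group_add)"
  by (induction m) (simp_all add: add.assoc)

lemma nmul_add: "nmul m (x + y) = nmul m x + nmul m (y::'a::ab_group_add)"
  by (induction m) (simp_all add: algebra_simps)

lemma nmul_zero[simp]: "nmul m (0::'a::ab_group_add) = 0"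
  by (induction m) simp_all

lemma nmul_minus: "nmul m (- x) = - nmul m (x::'a::ab_group_add)"
  by (induction m) (simp_all add: algebra_simps)

lemma nmul_diff: "nmul m (x - y) = nmul m x - nmul m (y::'a::ab_group_add)"
  using nmul_add[of m x "- y"] by (simp add: nmul_minus)

lemma nmul_one[simp]: "nmul 1 x = x"
  by simp

lemma nmul_mult: "nmul (m * l) x = nmul m (nmul l (x::'a::ab_group_add))"
  by (induction m) (simp_all add: nmul_add_n nmul_add)

lemma nmul_sum: "nmul m (sum f S) = (\<Sum>i\<in>S. nmul m (f i :: 'a::ab_group_add))"
  by (induction S rule: infinite_finite_induct) (simp_all add: nmul_add)

lemma sum_nmul: "nmul (sum f S) x = (\<Sum>i\<in>S. nmul (f i) (x :: 'a::ab_group_add))"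
  by (induction S rule: infinite_finite_induct) (simp_all add: nmul_add_n)

lemma sum_const_nmul: "finite A \<Longrightarrow> (\<Sum>u\<in>A. x) = nmul (card A) (x::'a::ab_group_add)"
  by (induction A rule: finite_induct) simp_all

lemma nmul_card:
  fixes x :: "'a::{ab_group_add,finite}"
  shows "nmul (card (UNIV::'a set)) x = 0"
proof -
  have "(\<Sum>u\<in>UNIV. u + x) = (\<Sum>u\<in>UNIV. u)"
  proof (rule sum.reindex_bij_witness[of _ "\<lambda>u. u - x" "\<lambda>u. u + x"])
  qed auto
  moreover have "(\<Sum>u\<in>UNIV. u + x) = (\<Sum>u\<in>UNIV. u) + nmul (card (UNIV::'a set)) x"
    by (simp add: sum.distrib sum_const_nmul)
  ultimately show ?thesis by simp
qed

section \<open>differences\<close>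

definition dlt :: "'a::ab_group_add \<Rightarrow> ('a \<Rightarrow> 'a) \<Rightarrow> ('a \<Rightarrow> 'a)" where
  "dlt x f = (\<lambda>b. f (b + x) - f b)"

fun DD :: "('a::ab_group_add \<Rightarrow> 'a) \<Rightarrow> 'a list \<Rightarrow> ('a \<Rightarrow> 'a)" where
  "DD f [] = f"
| "DD f (x # xs) = DD (dlt x f) xs"

lemma DD_append: "DD f (xs @ ys) = DD (DD f xs) ys"
  by (induction xs arbitrary: f) simp_all

lemma DD_add: "DD (\<lambda>b. f b + g b) xs = (\<lambda>b. DD f xs b + DD g xs b)"
proof (induction xs arbitrary: f g)
  case (Cons x xs)
  have "dlt x (\<lambda>b. f b + g b) = (\<lambda>b. dlt x f b + dlt x g b)"
    by (simp add: dlt_def fun_eq_iff algebra_simps)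
  then show ?case using Cons by simp
qed simp

lemma DD_diff: "DD (\<lambda>b. f b - g b) xs = (\<lambda>b. DD f xs b - DD g xs b)"
proof (induction xs arbitrary: f g)
  case (Cons x xs)
  have "dlt x (\<lambda>b. f b - g b) = (\<lambda>b. dlt x f b - dlt x g b)"
    by (simp add: dlt_def fun_eq_iff algebra_simps)
  then show ?case using Cons by simp
qed simp

lemma DD_zero_fun: "DD (\<lambda>b. 0) xs = (\<lambda>b. 0)"
  by (induction xs) (simp_all add: dlt_def)

lemma DD_const: "xs \<noteq> [] \<Longrightarrow> DD (\<lambda>b. c) xs = (\<lambda>b. 0)"
  by (cases xs) (simp_all add: dlt_def DD_zero_fun)

lemma DD_zero_dir: "DD f (0 # xs) = (\<lambda>b. 0)"
  by (simp add: dlt_def DD_zero_fun)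

lemma DD_hom:
  assumes "\<And>u v. \<phi> (u + v) = \<phi> u + \<phi> v"
  shows "DD (\<lambda>b. \<phi> (f b)) xs = (\<lambda>b. \<phi> (DD f xs b))"
proof (induction xs arbitrary: f)
  case (Cons x xs)
  have d: "\<phi> (u - v) = \<phi> u - \<phi> v" for u v
    using assms[of "u - v" v] by (simp add: algebra_simps)
  have "dlt x (\<lambda>b. \<phi> (f b)) = (\<lambda>b. \<phi> (dlt x f b))"
    by (simp add: dlt_def d)
  then show ?case using Cons by simp
qed simp

lemma DD_affine:
  assumes "\<And>u v. \<psi> (u + v) = \<psi> u + \<psi> v"
  shows "DD (\<lambda>b. f (\<psi> b + y)) xs b = DD f (map \<psi> xs) (\<psi> b + y)"
proof (induction xs arbitrary: f b)
  case (Cons x xs)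
  have "dlt x (\<lambda>b. f (\<psi> b + y)) = (\<lambda>b. dlt (\<psi> x) f (\<psi> b + y))"
    by (simp add: dlt_def assms fun_eq_iff algebra_simps)
  then show ?case using Cons by simp
qed simp

lemma DD_single: "DD f [x] b = f (b + x) - f b"
  by (simp add: dlt_def)

lemma DD_replicate: "DD f (replicate i u) = (dlt u ^^ i) f"
  by (induction i arbitrary: f) (simp_all add: funpow_Suc_right del: funpow.simps)

lemma dlt_pow_zero: "(dlt u ^^ n) (\<lambda>b. 0) = (\<lambda>b. (0::'a::ab_group_add))"
  by (induction n) (simp_all add: dlt_def)

lemma newton_full:
  fixes h :: "'a::ab_group_add \<Rightarrow> 'a"
  shows "h (b + nmul m u) = (\<Sum>i<Suc m. nmul (m choose i) ((dlt u ^^ i) h b))"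
proof (induction m arbitrary: h b)
  case 0 then show ?case by simp
next
  case (Suc m)
  define X where "X i = (dlt u ^^ i) h b" for i
  have sw: "(dlt u ^^ i) (dlt u h) = (dlt u ^^ Suc i) h" for i
    by (simp add: funpow_Suc_right del: funpow.simps)
  have "h (b + nmul (Suc m) u) = h (b + nmul m u) + dlt u h (b + nmul m u)"
    by (simp add: dlt_def algebra_simps)
  also have "\<dots> = (\<Sum>i<Suc m. nmul (m choose i) (X i)) + (\<Sum>i<Suc m. nmul (m choose i) (X (Suc i)))"
    unfolding Suc[of h] Suc[of "dlt u h"] X_def sw ..
  also have "(\<Sum>i<Suc m. nmul (m choose i) (X i)) = X 0 + (\<Sum>i<Suc m. nmul (m choose Suc i) (X (Suc i)))"
  proof -
    have "(\<Sum>i<Suc m. nmul (m choose Suc i) (X (Suc i))) = (\<Sum>i<m. nmul (m choose Suc i) (X (Suc i)))"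
      by (simp add: binomial_eq_0)
    thus ?thesis by (simp only: sum.lessThan_Suc_shift) simp
  qed
  also have "X 0 + (\<Sum>i<Suc m. nmul (m choose Suc i) (X (Suc i))) + (\<Sum>i<Suc m. nmul (m choose i) (X (Suc i)))
      = X 0 + (\<Sum>i<Suc m. nmul (Suc m choose Suc i) (X (Suc i)))"
    by (simp add: nmul_add_n sum.distrib algebra_simps del: sum.lessThan_Suc)
  also have "\<dots> = (\<Sum>i<Suc (Suc m). nmul (Suc m choose i) (X i))"
    by (simp add: sum.lessThan_Suc_shift del: sum.lessThan_Suc)
  finally show ?case unfolding X_def .
qed

lemma newton:
  fixes h :: "'a::ab_group_add \<Rightarrow> 'a"
  assumes z: "\<And>x. (dlt u ^^ K) h x = 0"
  shows "h (b + nmul m u) = (\<Sum>i<K. nmul (m choose i) ((dlt u ^^ i) h b))"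
proof -
  define f where "f i = nmul (m choose i) ((dlt u ^^ i) h b)" for i
  have f0: "f i = 0" if "K \<le> i" for i
  proof -
    have "(dlt u ^^ i) h = (dlt u ^^ (i - K)) ((dlt u ^^ K) h)"
    proof -
      have "i = (i - K) + K" using that by simp
      then show ?thesis by (metis funpow_add comp_apply)
    qed
    also have "(dlt u ^^ K) h = (\<lambda>b. 0)" using z by auto
    finally show ?thesis by (simp add: f_def dlt_pow_zero)
  qed
  have f1: "f i = 0" if "m < i" for i using that by (simp add: f_def binomial_eq_0)
  have "h (b + nmul m u) = (\<Sum>i<Suc m. f i)" unfolding f_def by (rule newton_full)
  also have "\<dots> = (\<Sum>i<Suc m + K. f i)"
    by (rule sum.mono_neutral_left) (auto intro: f1)
  also have "\<dots> = (\<Sum>i<K. f i)"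
    by (rule sum.mono_neutral_right) (auto intro: f0)
  finally show ?thesis unfolding f_def .
qed

lemma add_gen_sub: "add_subgroup (add_gen S)"
  unfolding add_gen_def add_subgroup_def by blast

lemma add_gen_incl: "S \<subseteq> add_gen S"
  unfolding add_gen_def by blast

lemma add_gen_least: "add_subgroup H \<Longrightarrow> S \<subseteq> H \<Longrightarrow> add_gen S \<subseteq> H"
  unfolding add_gen_def by blast

lemma add_subgroup_UNIV: "add_subgroup UNIV"
  unfolding add_subgroup_def by simp

locale brc =
  fixes circ :: "'a::ab_group_add \<Rightarrow> 'a \<Rightarrow> 'a"
  assumes br: "is_brace circ"
begin

lemma assoc: "circ (circ a b) c = circ a (circ b c)"
  using br unfolding is_brace_def by blast

lemma ld: "circ a (b + c) + a = circ a b + circ a c"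
  using br unfolding is_brace_def by blast

lemma ex_id: "\<exists>e. (\<forall>a. circ e a = a \<and> circ a e = a) \<and> (\<forall>a. \<exists>b. circ a b = e \<and> circ b a = e)"
  using br unfolding is_brace_def by blast

lemma id_zero: "(\<forall>a. circ 0 a = a \<and> circ a 0 = a) \<and> (\<forall>a. \<exists>b. circ a b = 0 \<and> circ b a = 0)"
proof -
  obtain e where e: "\<forall>a. circ e a = a \<and> circ a e = a" "\<forall>a. \<exists>b. circ a b = e \<and> circ b a = e"
    using ex_id by blast
  have "circ e (0 + 0) + e = circ e 0 + circ e 0" by (rule ld)
  hence "e = 0" using e by simp
  with e show ?thesis by simp
qed

lemma circ0l[simp]: "circ 0 a = a" and circ0r[simp]: "circ a 0 = a"
  using id_zero by auto

lemma inv_ex: "\<exists>b. circ a b = 0 \<and> circ b a = 0"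
  using id_zero by auto

abbreviation st where "st \<equiv> bstar circ"

definition lam where "lam a b = circ a b - a"

lemma lam_add: "lam a (b + c) = lam a b + lam a c"
  using ld[of a b c] unfolding lam_def by (simp add: algebra_simps)

lemma circ_diff: "circ a (u - v) = circ a u - circ a v + a"
  using ld[of a "u - v" v] by (simp add: algebra_simps)

lemma lam_comp: "lam a (lam b c) = lam (circ a b) c"
  unfolding lam_def by (simp add: circ_diff assoc)

lemma st_lam: "st a b = lam a b - b"
  unfolding lam_def bstar_def by simp

lemma st_add: "st a (b + c) = st a b + st a c"
  unfolding st_lam lam_add by (simp add: algebra_simps)

lemma st_circ: "st (circ a b) c = st a (st b c) + st a c + st b c"
proof -
  have "lam a (lam b c - c) = lam a (lam b c) - lam a c"
    using lam_add[of a "lam b c - c" c] by (simp add: algebra_simps)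
  thus ?thesis unfolding st_lam lam_comp[symmetric] by (simp add: algebra_simps)
qed

lemma st_zero_l[simp]: "st 0 b = 0" unfolding bstar_def by simp
lemma st_zero_r[simp]: "st a 0 = 0" unfolding bstar_def by simp

lemma lam_st: "lam a b = b + st a b" unfolding st_lam by simp

lemma translate:
  assumes "circ x xb = 0"
  shows "a + x = circ x (a + st xb a)"
proof -
  have "lam x (lam xb a) = a" unfolding lam_comp assms by (simp add: lam_def)
  thus ?thesis unfolding lam_st[symmetric] by (simp add: lam_def algebra_simps)
qed

lemma key:
  assumes "circ x xb = 0"
  shows "st (a + x) w - st a w = st x w + (st (a + st xb a) w - st a w) + st x (st (a + st xb a) w)"
  unfolding translate[OF assms, of a] st_circ by (simp add: algebra_simps)

abbreviation F where "F \<equiv> bpow circ"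

lemma F_sub: "add_subgroup (F i)"
proof (cases i)
  case 0 then show ?thesis by (simp add: add_subgroup_UNIV)
next
  case (Suc m) then show ?thesis
    by (cases m) (simp_all add: add_subgroup_UNIV add_gen_sub)
qed

lemma F_0[simp]: "0 \<in> F i" using F_sub[of i] unfolding add_subgroup_def by blast
lemma F_add: "x \<in> F i \<Longrightarrow> y \<in> F i \<Longrightarrow> x + y \<in> F i" using F_sub[of i] unfolding add_subgroup_def by blast
lemma F_minus: "x \<in> F i \<Longrightarrow> - x \<in> F i" using F_sub[of i] unfolding add_subgroup_def by blast
lemma F_diff: "x \<in> F i \<Longrightarrow> y \<in> F i \<Longrightarrow> x - y \<in> F i" using F_add[of x i "- y"] F_minus by simp
lemma F_1[simp]: "F (Suc 0) = UNIV" by simp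
lemma F_1'[simp]: "x \<in> F (Suc 0)" by simp

lemma prod_in:
  assumes "1 \<le> i" "1 \<le> j" "x \<in> F i" "y \<in> F j"
  shows "st x y \<in> F (i + j)"
proof -
  define m where "m = i + j - 2"
  have m: "i + j = Suc (Suc m)" using assms by (simp add: m_def)
  have i: "i \<in> {1..Suc m}" "Suc (Suc m) - i = j" using m assms by auto
  have "st x y \<in> {st a b | a b. a \<in> F i \<and> b \<in> F j}" using assms by auto
  hence "st x y \<in> bprod circ (F i) (F j)"
    unfolding bprod_def by (rule subsetD[OF add_gen_incl])
  hence "st x y \<in> bprod circ (F i) (F (Suc (Suc m) - i))" using i(2) by simp
  hence "st x y \<in> (\<Union>l\<in>{1..Suc m}. bprod circ (F l) (F (Suc (Suc m) - l)))"
    by (rule UN_I[OF i(1)])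
  hence "st x y \<in> add_gen (\<Union>l\<in>{1..Suc m}. bprod circ (F l) (F (Suc (Suc m) - l)))"
    by (rule subsetD[OF add_gen_incl])
  hence "st x y \<in> F (Suc (Suc m))" by (simp only: bpow.simps(3))
  thus ?thesis using m by simp
qed

lemma bprod_sub: "add_subgroup H \<Longrightarrow> (\<And>x y. x \<in> X \<Longrightarrow> y \<in> Y \<Longrightarrow> st x y \<in> H) \<Longrightarrow> bprod circ X Y \<subseteq> H"
  unfolding bprod_def by (rule add_gen_least) auto

lemma F_step: "F (Suc m) \<subseteq> F m"
proof (induction m rule: less_induct)
  case (less m)
  show ?case
  proof (cases "m < 2")
    case True
    then have "m = 0 \<or> m = 1" by auto
    then show ?thesis by auto
  next
    case False
    define m2 where "m2 = m - 2"
    have m: "m = Suc (Suc m2)" using False by (simp add: m2_def)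
    have "F (Suc (Suc (Suc m2))) \<subseteq> F (Suc (Suc m2))"
      unfolding bpow.simps(3)[of circ "Suc m2"]
    proof (rule add_gen_least[OF F_sub], rule UN_least)
      fix l assume l: "l \<in> {1..Suc (Suc m2)}"
      show "bprod circ (F l) (F (Suc (Suc (Suc m2)) - l)) \<subseteq> F (Suc (Suc m2))"
      proof (rule bprod_sub[OF F_sub])
        fix x y assume x: "x \<in> F l" and y: "y \<in> F (Suc (Suc (Suc m2)) - l)"
        show "st x y \<in> F (Suc (Suc m2))"
        proof (cases "l = Suc (Suc m2)")
          case True
          have "F (Suc (Suc m2)) \<subseteq> F (Suc m2)" using less.IH[of "Suc m2"] m by simp
          hence "x \<in> F (Suc m2)" using x True by blast
          hence "st x y \<in> F (Suc m2 + 1)" using prod_in[of "Suc m2" 1 x y] by simp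
          thus ?thesis by simp
        next
          case False
          define j where "j = Suc (Suc m2) - l"
          have lj: "Suc (Suc (Suc m2)) - l = Suc j" "1 \<le> j" "j < m" "1 \<le> l" "l + j = Suc (Suc m2)"
            using l False m by (auto simp: j_def)
          have "F (Suc j) \<subseteq> F j" using less.IH[of j] lj(3) by simp
          hence "y \<in> F j" using y lj(1) by auto
          hence "st x y \<in> F (l + j)" using prod_in[of l j x y] lj x by simp
          thus ?thesis using lj(5) by simp
        qed
      qed
    qed
    thus ?thesis using m by simp
  qed
qed

lemma F_anti: "i \<le> j \<Longrightarrow> F j \<subseteq> F i"
proof (induction j rule: dec_induct)
  case base then show ?case by simp
next
  case (step n) then show ?case using F_step[of n] by blast
qed

lemma prod_in':
  assumes "x \<in> F i" "y \<in> F j"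
  shows "st x y \<in> F (i + j)"
proof -
  have x: "x \<in> F (max i 1)" using assms(1) by (cases "i = 0") auto
  have y: "y \<in> F (max j 1)" using assms(2) by (cases "j = 0") auto
  have "st x y \<in> F (max i 1 + max j 1)" by (rule prod_in) (use x y in auto)
  moreover have "i + j \<le> max i 1 + max j 1" by simp
  ultimately show ?thesis using F_anti by blast
qed

end

definition wt :: "('a \<times> nat) list \<Rightarrow> nat" where "wt zs = sum_list (map snd zs)"
definition pmap :: "('a \<Rightarrow> 'a) \<Rightarrow> ('a \<times> nat) list \<Rightarrow> ('a \<times> nat) list" where
  "pmap \<psi> zs = map (\<lambda>z. (\<psi> (fst z), snd z)) zs"

lemma pmap_simps[simp]: "map fst (pmap \<psi> zs) = map \<psi> (map fst zs)" "wt (pmap \<psi> zs) = wt zs"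
  "length (pmap \<psi> zs) = length zs"
  by (simp_all add: pmap_def wt_def o_def)

lemma wt_simps[simp]: "wt [] = 0" "wt (z # zs) = snd z + wt zs" "wt (xs @ ys) = wt xs + wt ys"
  by (simp_all add: wt_def)

locale brcn = brc circ for circ :: "'a::ab_group_add \<Rightarrow> 'a \<Rightarrow> 'a" +
  fixes k :: nat
  assumes Fk: "bpow circ k = {0}"
begin

lemma F_big: "k \<le> m \<Longrightarrow> F m = {0}"
  using F_anti[of k m] Fk F_0[of m] by blast

definition valid :: "('a \<times> nat) list \<Rightarrow> bool" where
  "valid zs \<longleftrightarrow> (\<forall>z\<in>set zs. 1 \<le> snd z \<and> fst z \<in> F (snd z))"

definition msr :: "('a \<times> nat) list \<Rightarrow> nat" where
  "msr zs = sum_list (map (\<lambda>z. k - snd z) zs)"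

lemma valid_simps[simp]: "valid []" "valid (z # zs) \<longleftrightarrow> 1 \<le> snd z \<and> fst z \<in> F (snd z) \<and> valid zs"
  "valid (xs @ ys) \<longleftrightarrow> valid xs \<and> valid ys"
  by (auto simp: valid_def)

lemma msr_simps[simp]: "msr [] = 0" "msr (z # zs) = (k - snd z) + msr zs" "msr (xs @ ys) = msr xs + msr ys"
  by (simp_all add: msr_def)

lemma valid_pmap: "valid zs \<Longrightarrow> (\<And>u b. b \<in> F u \<Longrightarrow> \<psi> b \<in> F u) \<Longrightarrow> valid (pmap \<psi> zs)"
  by (auto simp: valid_def pmap_def)

lemma F_mono_mem: "x \<in> F j \<Longrightarrow> i \<le> j \<Longrightarrow> x \<in> F i"
  using F_anti by blast

lemma main:
  assumes w: "w \<in> F s"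
  shows "valid zs \<Longrightarrow> DD (\<lambda>a. st a w) (map fst zs) a \<in> F (s + wt zs)"
proof -
  define g where "g = (\<lambda>a. st a w)"
  have "\<forall>a. valid zs \<longrightarrow> DD g (map fst zs) a \<in> F (s + wt zs)"
  proof (induction zs rule: wf_induct_rule[OF wf_measures[of "[length, msr]"]])
    case (1 zs)
    have IHs: "DD g (map fst zs') a \<in> F (s + wt zs')" if "length zs' < length zs" "valid zs'" for zs' a
      using 1[of zs'] that by simp
    have IHm: "DD g (map fst zs') a \<in> F (s + wt zs')"
      if "length zs' = length zs" "msr zs' < msr zs" "valid zs'" for zs' a
      using 1[of zs'] that by simp
    show ?case
    proof (cases zs)
      case Nil
      have "st a w \<in> F (0 + s)" for a by (rule prod_in') (use w in auto)
      then show ?thesis using Nil by (simp add: g_def)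
    next
      case (Cons z ys)
      note zsC = Cons
      obtain x t where z: "z = (x, t)" by (cases z)
      show ?thesis
      proof (intro allI impI)
        fix a assume vz: "valid zs"
        have t1: "1 \<le> t" and xF: "x \<in> F t" and vys: "valid ys" using vz Cons z by auto
        show "DD g (map fst zs) a \<in> F (s + wt zs)"
        proof (cases "k \<le> t")
          case True
          hence "x = 0" using xF F_big by blast
          then show ?thesis using Cons z by (simp add: DD_zero_dir del: DD.simps(2))
        next
          case False
          hence tk: "t < k" by simp
          obtain xb where xb: "circ x xb = 0" "circ xb x = 0" using inv_ex by blast
          have xbF: "xb \<in> F t"
          proof -
            have "st x xb \<in> F (t + 0)" by (rule prod_in') (use xF in auto)
            moreover have "xb = - x - st x xb" using xb(1) unfolding bstar_def by (simp add: algebra_simps)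
            ultimately show ?thesis using F_diff[OF F_minus[OF xF], of "st x xb"] by simp
          qed
          define \<psi> where "\<psi> b = b + st xb b" for b
          have \<psi>add: "\<psi> (u + v) = \<psi> u + \<psi> v" for u v by (simp add: \<psi>_def st_add algebra_simps)
          have \<nu>F: "st xb b \<in> F (t + u)" if "b \<in> F u" for b u by (rule prod_in') (use that xbF in auto)
          have \<psi>F: "\<psi> b \<in> F u" if "b \<in> F u" for b u
            using F_add[OF that F_mono_mem[OF \<nu>F[OF that]]] by (simp add: \<psi>_def)
          have dx: "dlt x g = (\<lambda>b. st x w + (g (\<psi> b) - g b) + st x (g (\<psi> b)))"
            using key[OF xb(1)] by (simp add: dlt_def g_def \<psi>_def fun_eq_iff)
          have TL: "\<forall>zs1 a. zs1 @ ys2 = ys \<longrightarrow>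
              DD (\<lambda>b. DD g (map fst zs1) (\<psi> b) - DD g (map fst zs1) b) (map fst ys2) a
                \<in> F (s + t + wt zs1 + wt ys2)" for ys2
          proof (induction ys2)
            case Nil
            show ?case
            proof (intro allI impI)
              fix zs1 a assume "zs1 @ [] = ys"
              hence zs1: "zs1 = ys" by simp
              define W where "W = ys @ [(st xb a, Suc t)]"
              have "DD g (map fst zs1) (\<psi> a) - DD g (map fst zs1) a = DD g (map fst W) a"
                by (simp add: W_def DD_append zs1 \<psi>_def dlt_def)
              moreover have "DD g (map fst W) a \<in> F (s + wt W)"
                by (rule IHm) (use Cons z tk vys \<nu>F[of a 1] in \<open>auto simp: W_def\<close>)
              moreover have "s + t + wt zs1 + wt [] \<le> s + wt W" by (simp add: W_def zs1)
              ultimately show "DD (\<lambda>b. DD g (map fst zs1) (\<psi> b) - DD g (map fst zs1) b) (map fst []) a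
                \<in> F (s + t + wt zs1 + wt [])" using F_mono_mem by simp
            qed
          next
            case (Cons yu ys2')
            obtain y u where yu: "yu = (y, u)" by (cases yu)
            show ?case
            proof (intro allI impI)
              fix zs1 a assume e: "zs1 @ yu # ys2' = ys"
              have vsplit: "valid zs1" "1 \<le> u" "y \<in> F u" "valid ys2'" using vys e yu by auto
              define h where "h = DD g (map fst zs1)"
              define h' where "h' = DD g (map fst (zs1 @ [yu]))"
              have dl: "dlt y (\<lambda>b. h (\<psi> b) - h b) =
                  (\<lambda>b. DD g (map fst zs1 @ [st xb y]) (\<psi> b + y) + (h' (\<psi> b) - h' b))"
              proof -
                have pe: "\<psi> (b + y) = \<psi> b + y + st xb y" for b by (simp add: \<psi>_def st_add algebra_simps)
                have e1: "h' = dlt y h" by (simp add: h'_def h_def yu DD_append)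
                have e2: "DD g (map fst zs1 @ [st xb y]) = dlt (st xb y) h" by (simp add: h_def DD_append)
                show ?thesis unfolding e1 e2 by (simp add: fun_eq_iff dlt_def pe)
              qed
              define W where "W = zs1 @ [(st xb y, t + u)] @ pmap \<psi> ys2'"
              have A: "DD (\<lambda>b. DD g (map fst zs1 @ [st xb y]) (\<psi> b + y)) (map fst ys2') a
                  = DD g (map fst W) (\<psi> a + y)"
                by (simp add: DD_affine[OF \<psi>add] DD_append W_def)
              have vp: "valid (pmap \<psi> ys2')" by (rule valid_pmap[OF vsplit(4)]) (rule \<psi>F)
              have B: "DD g (map fst W) (\<psi> a + y) \<in> F (s + wt W)"
                by (rule IHs) (use zsC e vsplit \<nu>F[OF vsplit(3)] vp in \<open>auto simp: W_def\<close>)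
              have C: "DD (\<lambda>b. h' (\<psi> b) - h' b) (map fst ys2') a \<in> F (s + t + wt (zs1 @ [yu]) + wt ys2')"
                using Cons.IH e unfolding h'_def by auto
              have D: "DD (\<lambda>b. h (\<psi> b) - h b) (map fst (yu # ys2')) a
                  = DD (\<lambda>b. DD g (map fst zs1 @ [st xb y]) (\<psi> b + y)) (map fst ys2') a
                    + DD (\<lambda>b. h' (\<psi> b) - h' b) (map fst ys2') a"
                by (simp add: yu dl DD_add)
              have w1: "s + wt W = s + t + wt zs1 + wt (yu # ys2')" by (simp add: W_def yu)
              have w2: "s + t + wt (zs1 @ [yu]) + wt ys2' = s + t + wt zs1 + wt (yu # ys2')" by (simp add: yu)
              have B': "DD (\<lambda>b. DD g (map fst zs1 @ [st xb y]) (\<psi> b + y)) (map fst ys2') a \<in> F (s + t + wt zs1 + wt (yu # ys2'))"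
                using B unfolding A w1 .
              have C': "DD (\<lambda>b. h' (\<psi> b) - h' b) (map fst ys2') a \<in> F (s + t + wt zs1 + wt (yu # ys2'))"
                using C unfolding w2 .
              show "DD (\<lambda>b. DD g (map fst zs1) (\<psi> b) - DD g (map fst zs1) b) (map fst (yu # ys2')) a
                \<in> F (s + t + wt zs1 + wt (yu # ys2'))"
                using F_add[OF B' C'] unfolding D[symmetric] h_def .
            qed
          qed
          have T1: "DD (\<lambda>b. st x w) (map fst ys) a \<in> F (s + wt zs)"
          proof (cases "ys = []")
            case True
            have "st x w \<in> F (t + s)" by (rule prod_in') (use xF w in auto)
            then show ?thesis using True Cons z by (simp add: add.commute)
          next
            case False then show ?thesis by (simp add: DD_const)
          qed
          have T2: "DD (\<lambda>b. g (\<psi> b) - g b) (map fst ys) a \<in> F (s + wt zs)"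
            using TL[of ys] Cons z by (simp add: add.assoc)
          have T3: "DD (\<lambda>b. st x (g (\<psi> b))) (map fst ys) a \<in> F (s + wt zs)"
          proof -
            have "DD (\<lambda>b. st x (g (\<psi> b))) (map fst ys) a = st x (DD (\<lambda>b. g (\<psi> b + 0)) (map fst ys) a)"
              using DD_hom[of "st x" "\<lambda>b. g (\<psi> b)", OF st_add] by simp
            also have "\<dots> = st x (DD g (map fst (pmap \<psi> ys)) (\<psi> a + 0))"
              by (simp only: DD_affine[OF \<psi>add] pmap_simps)
            finally have eq: "DD (\<lambda>b. st x (g (\<psi> b))) (map fst ys) a = st x (DD g (map fst (pmap \<psi> ys)) (\<psi> a + 0))" .
            have "DD g (map fst (pmap \<psi> ys)) (\<psi> a + 0) \<in> F (s + wt (pmap \<psi> ys))"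
              by (rule IHs) (use Cons valid_pmap[OF vys, of \<psi>] \<psi>F in auto)
            hence "st x (DD g (map fst (pmap \<psi> ys)) (\<psi> a + 0)) \<in> F (t + (s + wt ys))"
              using prod_in'[OF xF] by simp
            thus ?thesis using eq Cons z by (simp add: algebra_simps)
          qed
          have "DD g (map fst zs) a = DD (dlt x g) (map fst ys) a" using Cons z by simp
          also have "\<dots> = DD (\<lambda>b. st x w) (map fst ys) a + DD (\<lambda>b. g (\<psi> b) - g b) (map fst ys) a
              + DD (\<lambda>b. st x (g (\<psi> b))) (map fst ys) a"
            unfolding dx by (simp add: DD_add)
          finally show ?thesis using F_add[OF F_add[OF T1 T2] T3] by simp
        qed
      qed
    qed
  qed
  thus "valid zs \<Longrightarrow> DD (\<lambda>a. st a w) (map fst zs) a \<in> F (s + wt zs)" unfolding g_def by blast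
qed

end

context brcn
begin

lemma DD_vanish:
  assumes "k \<le> length xs"
  shows "DD (\<lambda>a. st a c) xs b = 0"
proof -
  define zs where "zs = map (\<lambda>x. (x, 1::nat)) xs"
  have v: "valid zs" by (simp add: valid_def zs_def)
  have m: "map fst zs = xs" by (simp add: zs_def o_def)
  have wz: "wt zs = length xs" by (simp add: zs_def wt_def o_def sum_list_triv)
  have "DD (\<lambda>a. st a c) xs b \<in> F (1 + length xs)"
    using main[of c 1 zs b] v m wz by simp
  thus ?thesis using F_big[of "1 + length xs"] assms by simp
qed

definition cc :: "'a \<Rightarrow> 'a \<Rightarrow> 'a \<Rightarrow> nat \<Rightarrow> nat \<Rightarrow> 'a" where
  "cc a b c i j = DD (\<lambda>x. st x c) (replicate i a @ replicate j b) 0"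

lemma cc_zero: "k \<le> i + j \<Longrightarrow> cc a b c i j = 0"
  unfolding cc_def by (rule DD_vanish) simp

lemma cc00: "cc a b c 0 0 = 0"
  by (simp add: cc_def)

lemma G_formula:
  "st (nmul m a + nmul l b) c = (\<Sum>i<k. \<Sum>j<k. nmul ((m choose i) * (l choose j)) (cc a b c i j))"
proof -
  define g where "g = (\<lambda>x. st x c)"
  have h1: "(dlt a ^^ k) g x = 0" for x
    unfolding DD_replicate[symmetric] g_def by (rule DD_vanish) simp
  have "g (nmul l b + nmul m a) = (\<Sum>i<k. nmul (m choose i) ((dlt a ^^ i) g (nmul l b)))"
    by (rule newton[OF h1])
  also have "\<dots> = (\<Sum>i<k. nmul (m choose i) (\<Sum>j<k. nmul (l choose j) (cc a b c i j)))"
  proof (rule sum.cong[OF refl])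
    fix i assume "i \<in> {..<k}"
    have e: "(dlt b ^^ j) ((dlt a ^^ i) g) = DD g (replicate i a @ replicate j b)" for j
      by (simp add: DD_append DD_replicate)
    have h2: "(dlt b ^^ k) ((dlt a ^^ i) g) x = 0" for x
    proof -
      have "DD g (replicate i a @ replicate k b) x = 0" unfolding g_def by (rule DD_vanish) simp
      thus ?thesis by (simp only: e)
    qed
    have "(dlt a ^^ i) g (0 + nmul l b) = (\<Sum>j<k. nmul (l choose j) ((dlt b ^^ j) ((dlt a ^^ i) g) 0))"
      by (rule newton[OF h2])
    thus "nmul (m choose i) ((dlt a ^^ i) g (nmul l b)) = nmul (m choose i) (\<Sum>j<k. nmul (l choose j) (cc a b c i j))"
      by (simp add: e cc_def g_def[symmetric])
  qed
  also have "\<dots> = (\<Sum>i<k. \<Sum>j<k. nmul ((m choose i) * (l choose j)) (cc a b c i j))"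
    by (simp add: nmul_sum nmul_mult)
  finally show ?thesis by (simp add: g_def add.commute)
qed

lemma sum_split0: "1 \<le> k \<Longrightarrow> (\<Sum>i<k. f i) = f 0 + (\<Sum>i\<in>{1..<k}. f i)"
proof -
  assume "1 \<le> k"
  hence "{..<k} = insert 0 {1..<k}" by auto
  thus ?thesis by simp
qed

lemma zc: "1 \<le> j \<Longrightarrow> (0 choose j) = 0"
  by (cases j) auto

lemma sum_zero_choose: "(\<Sum>j\<in>{1..<k}. nmul (X * (0 choose j)) (f j)) = (0::'a)"
  by (rule sum.neutral) (auto simp: zc)

lemma sum_zero_choose': "(\<Sum>j\<in>{1..<k}. nmul ((0 choose j) * X) (f j)) = (0::'a)"
  by (rule sum.neutral) (auto simp: zc)

lemma H_formula:
  assumes k1: "1 \<le> k"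
  shows "st (nmul M (a + b)) c = st (nmul M a) c + st (nmul M b) c
     + (\<Sum>i\<in>{1..<k}. \<Sum>j\<in>{1..<k}. nmul ((M choose i) * (M choose j)) (cc a b c i j))"
proof -
  have A: "st (nmul M (a + b)) c = st (nmul M a + nmul M b) c" by (simp add: nmul_add)
  have B: "st (nmul M a) c = st (nmul M a + nmul 0 b) c" by simp
  have C: "st (nmul M b) c = st (nmul 0 a + nmul M b) c" by simp
  have G0: "(\<Sum>i<k. \<Sum>j<k. nmul ((M choose i) * (0 choose j)) (cc a b c i j)) = (\<Sum>i<k. nmul (M choose i) (cc a b c i 0))"
  proof (rule sum.cong[OF refl])
    fix i show "(\<Sum>j<k. nmul ((M choose i) * (0 choose j)) (cc a b c i j)) = nmul (M choose i) (cc a b c i 0)"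
      unfolding sum_split0[OF k1] sum_zero_choose by simp
  qed
  have G0': "(\<Sum>i<k. \<Sum>j<k. nmul ((0 choose i) * (M choose j)) (cc a b c i j)) = (\<Sum>j<k. nmul (M choose j) (cc a b c 0 j))"
    unfolding sum_split0[OF k1, of "\<lambda>i. \<Sum>j<k. nmul ((0 choose i) * (M choose j)) (cc a b c i j)"]
  proof -
    have "(\<Sum>i\<in>{1..<k}. \<Sum>j<k. nmul ((0 choose i) * (M choose j)) (cc a b c i j)) = 0"
      by (rule sum.neutral) (auto simp: zc)
    thus "(\<Sum>j<k. nmul ((0 choose 0) * (M choose j)) (cc a b c 0 j)) +
      (\<Sum>i\<in>{1..<k}. \<Sum>j<k. nmul ((0 choose i) * (M choose j)) (cc a b c i j)) = (\<Sum>j<k. nmul (M choose j) (cc a b c 0 j))"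
      by simp
  qed
  show ?thesis
    unfolding A B C G_formula G0 G0' by (simp add: sum_split0[OF k1] sum.distrib cc00 algebra_simps)
qed

end

lemma exp_kill:
  fixes x :: "'a::{ab_group_add,finite}"
  assumes "card (UNIV :: 'a set) dvd N"
  shows "nmul N x = 0"
proof -
  obtain q where "N = q * card (UNIV :: 'a set)" using assms by (auto simp: dvd_def mult.commute)
  thus ?thesis by (simp add: nmul_mult nmul_card)
qed

theorem proposition4:
  fixes circ :: "'a::{ab_group_add, finite} \<Rightarrow> 'a \<Rightarrow> 'a"
    and p n k \<gamma> \<xi> :: nat
  assumes "prime p" and "n + 1 < p" and "k < p"
    and "is_brace circ" and "card (UNIV :: 'a set) = p ^ n"
    and "strongly_nilpotent circ" and "nilpotency_index circ k"
    and "residue_primroot (p ^ p) \<gamma>"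
    and "\<xi> = \<gamma> ^ (p ^ (p - 1))"
  shows "\<forall>a b c. bdot circ p \<xi> (a + b) c = bdot circ p \<xi> a c + bdot circ p \<xi> b c
           \<and> bdot circ p \<xi> a (b + c) = bdot circ p \<xi> a b + bdot circ p \<xi> a c"
proof -
  have k1: "1 \<le> k" and Fk: "bpow circ k = {0}" using assms(7) by (auto simp: nilpotency_index_def)
  interpret B: brcn circ k
    by unfold_locales (use assms(4) Fk in auto)
  have p2: "2 \<le> p" using assms(1) prime_ge_2_nat by blast
  have S: "{0..p-2} = {..<p-1}" using p2 by auto
  show ?thesis
  proof (intro allI conjI)
    fix a b c
    show "bdot circ p \<xi> a (b + c) = bdot circ p \<xi> a b + bdot circ p \<xi> a c"
      unfolding bdot_def by (simp add: B.st_add nmul_add sum.distrib)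
    define w where "w s = \<xi> ^ (p - 1 - s)" for s
    define N where "N s i j = (\<xi>^s choose i) * (\<xi>^s choose j)" for s i j
    define I where "I = {1..<k}"
    define cc where "cc = B.cc a b c"
    have zero: "(\<Sum>s<p-1. nmul (w s) (\<Sum>i\<in>I. \<Sum>j\<in>I. nmul (N s i j) (cc i j))) = 0"
    proof -
      have "(\<Sum>s<p-1. nmul (w s) (\<Sum>i\<in>I. \<Sum>j\<in>I. nmul (N s i j) (cc i j)))
          = (\<Sum>s<p-1. \<Sum>i\<in>I. \<Sum>j\<in>I. nmul (w s * N s i j) (cc i j))"
        by (simp add: nmul_sum nmul_mult)
      also have "\<dots> = (\<Sum>i\<in>I. \<Sum>j\<in>I. \<Sum>s<p-1. nmul (w s * N s i j) (cc i j))"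
        by (subst sum.swap) (rule sum.cong[OF refl], rule sum.swap)
      also have "\<dots> = (\<Sum>i\<in>I. \<Sum>j\<in>I. nmul (\<Sum>s<p-1. w s * N s i j) (cc i j))"
        by (simp add: sum_nmul)
      also have "\<dots> = 0"
      proof (intro sum.neutral ballI)
        fix i j assume i: "i \<in> I" and j: "j \<in> I"
        show "nmul (\<Sum>s<p-1. w s * N s i j) (cc i j) = 0"
        proof (cases "k \<le> i + j")
          case True then show ?thesis by (simp add: cc_def B.cc_zero)
        next
          case False
          have "p^p dvd (\<Sum>s<p-1. \<xi>^(p-1-s) * (((\<xi>^s) choose i) * ((\<xi>^s) choose j)))"
            by (rule nt_main[OF assms(1) assms(8) assms(9)]) (use i j False assms(3) I_def in auto)
          moreover have "p^n dvd p^p" using assms(2) by (simp add: le_imp_power_dvd)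
          ultimately have "card (UNIV :: 'a set) dvd (\<Sum>s<p-1. w s * N s i j)"
            unfolding assms(5) w_def N_def using dvd_trans by blast
          thus ?thesis by (rule exp_kill)
        qed
      qed
      finally show ?thesis .
    qed
    have "bdot circ p \<xi> (a + b) c =
       (\<Sum>s<p-1. nmul (w s) (B.st (nmul (\<xi>^s) a) c + B.st (nmul (\<xi>^s) b) c
           + (\<Sum>i\<in>I. \<Sum>j\<in>I. nmul (N s i j) (cc i j))))"
      unfolding bdot_def S w_def N_def I_def cc_def using B.H_formula[OF k1] by simp
    also have "\<dots> = bdot circ p \<xi> a c + bdot circ p \<xi> b c
        + (\<Sum>s<p-1. nmul (w s) (\<Sum>i\<in>I. \<Sum>j\<in>I. nmul (N s i j) (cc i j)))"
      unfolding bdot_def S w_def by (simp add: nmul_add sum.distrib)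
    finally show "bdot circ p \<xi> (a + b) c = bdot circ p \<xi> a c + bdot circ p \<xi> b c"
      unfolding zero by simp
  qed
qed

end
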